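(* Let $m$ be an even positive integer, $t\ge3$ an odd integer, and $n\ge1$. If there exists an MS$(m,t)$ and there exists an MS$(n,t-1)$, then there exists an MS$(mn,t)$.
   Context: An $n\times n$ integer matrix is a general magic square if all row sums, column sums and the two diagonal sums $\sum_i a_{i,i}$, $\sum_i a_{i,n-1-i}$ are equal. An MS$(n,t)$ ($t$-multimagic square of order $n$) is an $n\times n$ matrix whose entries are exactly $0,1,\dots,n^2-1$ such that the entrywise powers $(a_{i,j}^e)$ are general magic squares for all $e=1,\dots,t$. *)

theory Defs
  imports Main
begin

text \<open>An n x n matrix is modelled as a function a :: nat => nat => int, only the
entries a i j with i, j < n being relevant.\<close>

definition general_magic :: "nat \<Rightarrow> (nat \<Rightarrow> nat \<Rightarrow> int) \<Rightarrow> bool" where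
  "general_magic n a \<longleftrightarrow>
     (\<exists>s. (\<forall>i<n. (\<Sum>j<n. a i j) = s) \<and>
          (\<forall>j<n. (\<Sum>i<n. a i j) = s) \<and>
          (\<Sum>i<n. a i i) = s \<and>
          (\<Sum>i<n. a i (n - 1 - i)) = s)"

definition multimagic :: "nat \<Rightarrow> nat \<Rightarrow> (nat \<Rightarrow> nat \<Rightarrow> nat) \<Rightarrow> bool" where
  "multimagic n t a \<longleftrightarrow>
     bij_betw (\<lambda>(i, j). a i j) ({..<n} \<times> {..<n}) {..<n^2} \<and>
     (\<forall>e\<in>{1..t}. general_magic n (\<lambda>i j. (int (a i j)) ^ e))"

end

theory Submission
  imports Defs
begin

definition lines :: "nat \<Rightarrow> (nat \<Rightarrow> nat \<times> nat) set" where
  "lines n = {(\<lambda>v. (i, v)) | i. i < n} \<union> {(\<lambda>v. (v, j)) | j. j < n} \<union>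
             {(\<lambda>v. (v, v)), (\<lambda>v. (v, n - 1 - v))}"

definition lsum :: "nat \<Rightarrow> (nat \<Rightarrow> nat \<Rightarrow> int) \<Rightarrow> (nat \<Rightarrow> nat \<times> nat) \<Rightarrow> int" where
  "lsum n g l = (\<Sum>v<n. g (fst (l v)) (snd (l v)))"

lemma rowI: "i < n \<Longrightarrow> (\<lambda>v. (i, v)) \<in> lines n" unfolding lines_def by blast
lemma colI: "j < n \<Longrightarrow> (\<lambda>v. (v, j)) \<in> lines n" unfolding lines_def by blast
lemma diagI: "(\<lambda>v. (v, v)) \<in> lines n" unfolding lines_def by blast
lemma antiI: "(\<lambda>v. (v, n - 1 - v)) \<in> lines n" unfolding lines_def by blast

lemma lines_cases:
  assumes "l \<in> lines N"
  obtains (r) i where "l = (\<lambda>v. (i, v))" "i < N" | (c) j where "l = (\<lambda>v. (v, j))" "j < N"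
    | (d) "l = (\<lambda>v. (v, v))" | (a) "l = (\<lambda>v. (v, N - 1 - v))"
proof -
  have "(\<exists>i. l = (\<lambda>v. (i, v)) \<and> i < N) \<or> (\<exists>j. l = (\<lambda>v. (v, j)) \<and> j < N) \<or> l = (\<lambda>v. (v, v)) \<or> l = (\<lambda>v. (v, N - 1 - v))"
    using assms unfolding lines_def by (simp only: Un_iff mem_Collect_eq insert_iff empty_iff simp_thms disj_assoc)
  then show thesis using that by (elim disjE exE conjE) simp_all
qed

lemma gm_iff: "general_magic n g \<longleftrightarrow> (\<exists>s. \<forall>l\<in>lines n. lsum n g l = s)"
  unfolding general_magic_def lsum_def lines_def
  apply (rule iffI)
   apply (elim exE conjE)
   apply (rule_tac x=s in exI)
   apply auto[1]
  apply (elim exE)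
  subgoal for s
    apply (rule exI[of _ s])
    apply (intro conjI allI impI)
    subgoal for i by (drule bspec[of _ _ "\<lambda>v. (i, v)"]) auto
    subgoal for j by (drule bspec[of _ _ "\<lambda>v. (v, j)"]) auto
     apply (drule bspec[of _ _ "\<lambda>v. (v, v)"]) apply auto[2]
    apply (drule bspec[of _ _ "\<lambda>v. (v, n - 1 - v)"]) apply auto[2]
    done
  done

lemma sum_split:
  "(\<Sum>J<m*n. (f::nat\<Rightarrow>int) J) = (\<Sum>u<m. \<Sum>v<n. f (u*n+v))"
proof -
  have "(\<Sum>J<m*n. f J) = (\<Sum>u<m. sum f {u*n..<u*n+n})"
    by (rule sum.nat_group[symmetric])
  also have "\<dots> = (\<Sum>u<m. \<Sum>v<n. f (u*n+v))"
  proof (rule sum.cong[OF refl])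
    fix u
    have "sum f {0+u*n..<n+u*n} = (\<Sum>v=0..<n. f (v+u*n))"
      by (rule sum.shift_bounds_nat_ivl)
    then show "sum f {u*n..<u*n+n} = (\<Sum>v<n. f (u*n+v))"
      by (simp add: atLeast0LessThan add.commute)
  qed
  finally show ?thesis .
qed

lemma anti_key: "m*n - 1 - (u*n+v) = (m - 1 - u)*n + (n - 1 - (v::nat))" if "u < m" "v < n" for u v
  proof -
    obtain m' where m': "m = Suc u + m'" using \<open>u < m\<close> less_imp_Suc_add by blast
    obtain n' where n': "n = Suc v + n'" using \<open>v < n\<close> less_imp_Suc_add by blast
    have a: "m - 1 - u = m'" "n - 1 - v = n'" using m' n' by simp_all
    have "m*n = (m'*n + n') + (u*n+v) + 1" unfolding m' n' by (simp add: algebra_simps)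
    then show ?thesis unfolding a by simp
  qed

lemma line_split:
  assumes "l \<in> lines (m*n)" "n > 0"
  shows "\<exists>l1\<in>lines m. \<exists>l2\<in>lines n. \<forall>u<m. \<forall>v<n.
     l (u*n+v) = (fst (l1 u)*n + fst (l2 v), snd (l1 u)*n + snd (l2 v))"
  using assms(1)
proof (cases rule: lines_cases)
  case (r i)
  have 1: "(\<lambda>v. (i div n, v)) \<in> lines m" using r(2)
    by (intro rowI) (simp add: less_mult_imp_div_less)
  have 2: "(\<lambda>v. (i mod n, v)) \<in> lines n" using assms(2) by (intro rowI) simp
  show ?thesis
    by (rule bexI[OF bexI[OF _ 2] 1]) (simp add: r(1))
next
  case (c j)
  have 1: "(\<lambda>v. (v, j div n)) \<in> lines m" using c(2)
    by (intro colI) (simp add: less_mult_imp_div_less)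
  have 2: "(\<lambda>v. (v, j mod n)) \<in> lines n" using assms(2) by (intro colI) simp
  show ?thesis
    by (rule bexI[OF bexI[OF _ 2] 1]) (simp add: c(1))
next
  case d
  show ?thesis
    by (rule bexI[OF bexI[OF _ diagI] diagI]) (simp add: d)
next
  case a
  show ?thesis
  proof (rule bexI[OF bexI[OF _ antiI] antiI], intro allI impI)
    fix u v assume uv: "u < m" "v < n"
    show "l (u*n+v) = (fst (u, m - 1 - u)*n + fst (v, n - 1 - v), snd (u, m - 1 - u)*n + snd (v, n - 1 - v))"
      unfolding a fst_conv snd_conv anti_key[OF uv] ..
  qed
qed

definition bv :: "(nat \<Rightarrow> nat \<Rightarrow> nat) \<Rightarrow> (nat \<Rightarrow> nat \<times> nat) \<Rightarrow> nat \<Rightarrow> int" where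
  "bv b l v = int (b (fst (l v)) (snd (l v)))"

lemma neg_exp: "((K::int) - x)^k = (\<Sum>j\<le>k. of_nat (k choose j) * (-1)^j * K^(k-j) * x^j)"
proof -
  have "(K - x)^k = (-x + K)^k" by simp
  also have "\<dots> = (\<Sum>j\<le>k. of_nat (k choose j) * (-x)^j * K^(k-j))" by (rule binomial_ring)
  also have "\<dots> = (\<Sum>j\<le>k. of_nat (k choose j) * (-1)^j * K^(k-j) * x^j)"
    by (rule sum.cong[OF refl]) (simp only: power_minus[of x] mult_ac)
  finally show ?thesis .
qed

lemma grid_sum:
  assumes "bij_betw (\<lambda>(i,j). b i j) ({..<n}\<times>{..<n}) {..<N}"
  shows "(\<Sum>i<n. \<Sum>j<n. (g::nat\<Rightarrow>int) (b i j)) = (\<Sum>x<N. g x)"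
proof -
  have "(\<Sum>i<n. \<Sum>j<n. g (b i j)) = (\<Sum>p\<in>{..<n}\<times>{..<n}. g ((\<lambda>(i,j). b i j) p))"
    by (simp add: sum.cartesian_product case_prod_beta')
  also have "\<dots> = (\<Sum>x<N. g x)" by (rule sum.reindex_bij_betw[OF assms])
  finally show ?thesis .
qed

context
  fixes n t :: nat and b :: "nat \<Rightarrow> nat \<Rightarrow> nat" and sB :: "nat \<Rightarrow> int"
  assumes bij: "bij_betw (\<lambda>(i,j). b i j) ({..<n}\<times>{..<n}) {..<n^2}"
  and sB: "\<And>k l. 1 \<le> k \<Longrightarrow> k < t \<Longrightarrow> l \<in> lines n \<Longrightarrow> (\<Sum>v<n. bv b l v ^ k) = sB k"
  and n1: "n \<ge> 1"
begin

lemma poly_line: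
  assumes "l \<in> lines n" "\<forall>j\<in>J. j < t" "finite J"
  shows "(\<Sum>v<n. \<Sum>j\<in>J. c j * bv b l v ^ j) = (\<Sum>j\<in>J. c j * (if j = 0 then of_nat n else sB j))"
proof -
  have "(\<Sum>v<n. \<Sum>j\<in>J. c j * bv b l v ^ j) = (\<Sum>j\<in>J. c j * (\<Sum>v<n. bv b l v ^ j))"
    by (subst sum.swap) (simp add: sum_distrib_left)
  also have "\<dots> = (\<Sum>j\<in>J. c j * (if j = 0 then of_nat n else sB j))"
  proof (rule sum.cong[OF refl])
    fix j assume "j \<in> J"
    then have jt: "j < t" using assms(2) by blast
    show "c j * (\<Sum>v<n. bv b l v ^ j) = c j * (if j = 0 then of_nat n else sB j)"
    proof (cases "j = 0")
      case False
      then have "1 \<le> j" by simp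
      from sB[OF this jt assms(1)] False show ?thesis by simp
    qed simp
  qed
  finally show ?thesis .
qed

definition Dk :: "nat \<Rightarrow> int" where
  "Dk k = (\<Sum>j\<le>k. of_nat (k choose j) * (-1)^j * (int (n^2) - 1)^(k-j) * (if j = 0 then of_nat n else sB j))"

lemma compl_line:
  assumes "l \<in> lines n" "k < t"
  shows "(\<Sum>v<n. (int (n^2) - 1 - bv b l v)^k) = Dk k"
proof -
  have "(\<Sum>v<n. (int (n^2) - 1 - bv b l v)^k) =
     (\<Sum>v<n. \<Sum>j\<le>k. (of_nat (k choose j) * (-1)^j * (int (n^2) - 1)^(k-j)) * bv b l v^j)"
    by (simp add: neg_exp)
  also have "\<dots> = Dk k" unfolding Dk_def
    by (rule poly_line) (use assms in auto)
  finally show ?thesis .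
qed

lemma compl_eq:
  assumes "1 \<le> k" "k < t"
  shows "Dk k = sB k"
proof -
  have rows: "(\<Sum>i<n. \<Sum>j<n. f (b i j)) = of_nat n * c"
    if "\<And>i. i < n \<Longrightarrow> (\<Sum>v<n. f (b i v)) = c" for f :: "nat \<Rightarrow> int" and c
    using that by simp
  have "of_nat n * Dk k = (\<Sum>i<n. \<Sum>j<n. (int (n^2) - 1 - int (b i j))^k)"
  proof (rule rows[symmetric])
    fix i assume "i < n"
    from compl_line[OF rowI[OF this] \<open>k < t\<close>]
    show "(\<Sum>v<n. (int (n^2) - 1 - int (b i v))^k) = Dk k" by (simp only: bv_def fst_conv snd_conv)
  qed
  also have "\<dots> = (\<Sum>x<n^2. (int (n^2) - 1 - int x)^k)"
    by (rule grid_sum[OF bij])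
  also have "\<dots> = (\<Sum>x<n^2. (int (n^2 - Suc x))^k)"
    by (rule sum.cong) (auto simp: of_nat_diff diff_diff_eq)
  also have "\<dots> = (\<Sum>x<n^2. (int x)^k)"
    by (rule sum.nat_diff_reindex)
  also have "\<dots> = (\<Sum>i<n. \<Sum>j<n. (int (b i j))^k)"
    by (rule grid_sum[OF bij, symmetric])
  also have "\<dots> = of_nat n * sB k"
  proof (rule rows)
    fix i assume "i < n"
    from sB[OF assms rowI[OF this]]
    show "(\<Sum>v<n. int (b i v)^k) = sB k" by (simp only: bv_def fst_conv snd_conv)
  qed
  finally have "of_nat n * Dk k = of_nat n * sB k" .
  then show ?thesis using n1 by simp
qed

definition Tc :: int where
  "Tc = (\<Sum>j<t. of_nat (t choose j) * (-1)^j * (int (n^2) - 1)^(t-j) * (if j = 0 then of_nat n else sB j))"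

lemma T_line:
  assumes "l \<in> lines n" "odd t"
  shows "(\<Sum>v<n. bv b l v ^ t + (int (n^2) - 1 - bv b l v)^t) = Tc"
proof -
  have e: "x ^ t + (K - x)^t = (\<Sum>j<t. of_nat (t choose j) * (-1)^j * K^(t-j) * x^j)" for x K :: int
    using assms(2) by (simp add: neg_exp lessThan_Suc_atMost[symmetric])
  show ?thesis unfolding e Tc_def
    by (rule poly_line) (use assms in auto)
qed


lemma compl_sum:
  assumes "l \<in> lines n" "1 \<le> k" "k < t"
  shows "(\<Sum>v<n. (int (n^2) - 1 - bv b l v)^k) = sB k"
  using compl_line[OF assms(1,3)] compl_eq[OF assms(2,3)] by simp

lemma T_exists:
  assumes "odd t"
  shows "\<exists>T. \<forall>l\<in>lines n. (\<Sum>v<n. bv b l v ^ t + (int (n^2) - 1 - bv b l v)^t) = T"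
  using T_line[OF _ assms] by blast

end

lemma core:
  fixes \<alpha> \<beta> :: "nat \<Rightarrow> int" and \<pi> :: "nat \<Rightarrow> bool" and X K T :: int and sA sB :: "nat \<Rightarrow> int"
  assumes A: "\<And>k. 1 \<le> k \<Longrightarrow> k \<le> t \<Longrightarrow> (\<Sum>u<m. \<alpha> u ^ k) = sA k"
  and B0: "\<And>k. 1 \<le> k \<Longrightarrow> k < t \<Longrightarrow> (\<Sum>v<n. \<beta> v ^ k) = sB k"
  and B1: "\<And>k. 1 \<le> k \<Longrightarrow> k < t \<Longrightarrow> (\<Sum>v<n. (K - \<beta> v) ^ k) = sB k"
  and T: "(\<Sum>v<n. \<beta> v ^ t + (K - \<beta> v) ^ t) = T"
  and cardp: "card {u\<in>{..<m}. \<pi> u} = h" and mh: "m = 2*h"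
  and e: "1 \<le> e" "e \<le> t"
  shows "(\<Sum>u<m. \<Sum>v<n. (X * \<alpha> u + (if \<pi> u then K - \<beta> v else \<beta> v)) ^ e) =
    (\<Sum>k\<le>e. of_nat (e choose k) * X^k * (if k = 0 then (if e < t then of_nat m * sB e else of_nat h * T)
        else sA k * (if k = e then of_nat n else sB (e-k))))"
proof -
  define \<beta>' where "\<beta>' u v = (if \<pi> u then K - \<beta> v else \<beta> v)" for u v
  have inner: "(\<Sum>v<n. \<beta>' u v ^ l) = (if l = 0 then of_nat n else sB l)" if "l < t" for u l
  proof (cases "l = 0")
    case True then show ?thesis by simp
  next
    case False then show ?thesis using B0[of l] B1[of l] \<open>l < t\<close> by (cases "\<pi> u") (simp_all add: \<beta>'_def)
  qed
  have "(\<Sum>u<m. \<Sum>v<n. (X * \<alpha> u + \<beta>' u v) ^ e) =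
        (\<Sum>u<m. \<Sum>v<n. \<Sum>k\<le>e. of_nat (e choose k) * X^k * (\<alpha> u ^ k * \<beta>' u v ^ (e-k)))"
    by (simp add: binomial_ring power_mult_distrib mult.assoc)
  also have "\<dots> = (\<Sum>u<m. \<Sum>k\<le>e. \<Sum>v<n. of_nat (e choose k) * X^k * (\<alpha> u ^ k * \<beta>' u v ^ (e-k)))"
    by (rule sum.cong[OF refl], rule sum.swap)
  also have "\<dots> = (\<Sum>k\<le>e. \<Sum>u<m. \<Sum>v<n. of_nat (e choose k) * X^k * (\<alpha> u ^ k * \<beta>' u v ^ (e-k)))"
    by (rule sum.swap)
  also have "\<dots> = (\<Sum>k\<le>e. of_nat (e choose k) * X^k * (\<Sum>u<m. \<alpha> u ^ k * (\<Sum>v<n. \<beta>' u v ^ (e-k))))"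
    by (simp add: sum_distrib_left)
  also have "\<dots> = (\<Sum>k\<le>e. of_nat (e choose k) * X^k * (if k = 0 then (if e < t then of_nat m * sB e else of_nat h * T)
        else sA k * (if k = e then of_nat n else sB (e-k))))"
  proof (rule sum.cong[OF refl])
    fix k assume k: "k \<in> {..e}"
    show "of_nat (e choose k) * X^k * (\<Sum>u<m. \<alpha> u ^ k * (\<Sum>v<n. \<beta>' u v ^ (e-k))) =
      of_nat (e choose k) * X^k * (if k = 0 then (if e < t then of_nat m * sB e else of_nat h * T)
        else sA k * (if k = e then of_nat n else sB (e-k)))"
    proof (cases "k = 0")
      case False
      have "(\<Sum>u<m. \<alpha> u ^ k * (\<Sum>v<n. \<beta>' u v ^ (e-k))) = (\<Sum>u<m. \<alpha> u ^ k * (if e - k = 0 then of_nat n else sB (e-k)))"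
        using inner[of "e-k"] False k e by simp
      also have "\<dots> = sA k * (if k = e then of_nat n else sB (e-k))"
        using A[of k] False k e by (simp add: sum_distrib_right[symmetric])
      finally show ?thesis using False by simp
    next
      case True
      show ?thesis
      proof (cases "e < t")
        case True
        then show ?thesis using inner[of e] \<open>k = 0\<close> e by simp
      next
        case False
        with e have et: "e = t" by simp
        define P0 where "P0 = (\<Sum>v<n. \<beta> v ^ t)"
        define P1 where "P1 = (\<Sum>v<n. (K - \<beta> v) ^ t)"
        have "(\<Sum>u<m. (\<Sum>v<n. \<beta>' u v ^ e)) = (\<Sum>u<m. P0 + (if \<pi> u then P1 - P0 else 0))"
          by (rule sum.cong) (auto simp: \<beta>'_def et P0_def P1_def)
        also have "\<dots> = of_nat m * P0 + (\<Sum>u\<in>{u\<in>{..<m}. \<pi> u}. P1 - P0)"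
          unfolding sum.distrib sum.inter_filter[OF finite_lessThan, symmetric] by simp
        also have "\<dots> = of_nat h * T"
        proof -
          have "T = P0 + P1" using T by (simp add: sum.distrib P0_def P1_def)
          then show ?thesis using cardp mh by (simp add: algebra_simps)
        qed
        finally show ?thesis using \<open>k = 0\<close> et by simp
      qed
    qed
  qed
  finally show ?thesis unfolding \<beta>'_def .
qed
lemma count_half:
  fixes f :: "nat \<Rightarrow> bool" and \<sigma> :: "nat \<Rightarrow> nat"
  assumes inj: "inj_on \<sigma> {..<h}" and rng: "\<And>i. i < h \<Longrightarrow> h \<le> \<sigma> i \<and> \<sigma> i < 2*h"
    and opp: "\<And>i. i < h \<Longrightarrow> f i \<noteq> f (\<sigma> i)"
  shows "card {u\<in>{..<2*h}. f u} = h"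
proof -
  have img: "\<sigma> ` {..<h} = {h..<2*h}"
  proof (rule card_subset_eq)
    show "\<sigma> ` {..<h} \<subseteq> {h..<2*h}" using rng by auto
    show "card (\<sigma> ` {..<h}) = card {h..<2*h}" using card_image[OF inj] by simp
  qed simp
  have bij: "bij_betw \<sigma> {..<h} {h..<2*h}" using inj img by (simp add: bij_betw_def)
  define g where "g u = (if f u then 1 else 0::nat)" for u
  have "card {u\<in>{..<2*h}. f u} = (\<Sum>u<2*h. g u)"
    by (simp add: g_def sum.inter_filter[symmetric])
  also have "\<dots> = (\<Sum>u<h. g u) + (\<Sum>u\<in>{h..<2*h}. g u)"
  proof -
    have eq: "{..<2*h} = {..<h} \<union> {h..<2*h}" by auto
    have "sum g ({..<h} \<union> {h..<2*h}) = sum g {..<h} + sum g {h..<2*h}"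
      by (rule sum.union_disjoint) auto
    then show ?thesis unfolding eq[symmetric] .
  qed
  also have "(\<Sum>u\<in>{h..<2*h}. g u) = (\<Sum>u<h. g (\<sigma> u))"
    by (rule sum.reindex_bij_betw[OF bij, symmetric])
  also have "(\<Sum>u<h. g u) + (\<Sum>u<h. g (\<sigma> u)) = (\<Sum>u<h. g u + g (\<sigma> u))"
    by (simp add: sum.distrib)
  also have "\<dots> = (\<Sum>u<h. 1)"
    by (rule sum.cong[OF refl]) (use opp in \<open>auto simp: g_def\<close>)
  finally show ?thesis by simp
qed

definition pat :: "nat \<Rightarrow> nat \<Rightarrow> nat \<Rightarrow> bool" where
  "pat h i j = odd (j + (if i < h then 1 else 0) +
      (if odd h \<and> (i = 0 \<or> i = h) \<and> (j = 0 \<or> j = 2*h - 1) then 1 else 0))"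
lemma pr: "h \<ge> 2 \<Longrightarrow> j < h \<Longrightarrow> pat h i j \<noteq> pat h i (2*h - 1 - j)"
  unfolding pat_def by (simp split: if_split; presburger)
lemma pc: "h \<ge> 2 \<Longrightarrow> i < h \<Longrightarrow> pat h i j \<noteq> pat h (i+h) j"
  unfolding pat_def by (simp split: if_split; presburger)
lemma pde: "h \<ge> 2 \<Longrightarrow> even h \<Longrightarrow> i < h \<Longrightarrow> pat h i i \<noteq> pat h (i+h) (i+h)"
  unfolding pat_def by (simp split: if_split; presburger)
lemma pdo: "h \<ge> 2 \<Longrightarrow> odd h \<Longrightarrow> i < h \<Longrightarrow> pat h i i \<noteq> pat h (if i = 0 then 2*h - 1 else h + i - 1) (if i = 0 then 2*h - 1 else h + i - 1)"
  unfolding pat_def by (simp split: if_split; presburger)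
lemma pae: "h \<ge> 2 \<Longrightarrow> even h \<Longrightarrow> i < h \<Longrightarrow> pat h i (2*h-1-i) \<noteq> pat h (i+h) (2*h-1-(i+h))"
  unfolding pat_def by (simp split: if_split; presburger)
lemma pao: "h \<ge> 2 \<Longrightarrow> odd h \<Longrightarrow> i < h \<Longrightarrow> pat h i (2*h-1-i) \<noteq> pat h (if i = 0 then 2*h - 1 else h + i - 1) (2*h-1-(if i = 0 then 2*h - 1 else h + i - 1))"
  unfolding pat_def by (simp split: if_split; presburger)

lemma inj_shift: "inj_on (\<lambda>i. if i = 0 then 2*h - 1 else h + i - 1) {..<(h::nat)}"
  by (auto simp: inj_on_def split: if_splits)

lemma pat_lines:
  assumes h2: "h \<ge> 2" and l: "l \<in> lines (2*h)"
  shows "card {u\<in>{..<2*h}. pat h (fst (l u)) (snd (l u))} = h"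
  using l
proof (cases rule: lines_cases)
  case (r i)
  show ?thesis
  proof (rule count_half[where \<sigma>="\<lambda>j. 2*h - 1 - j"])
    fix u assume u: "u < h"
    show "pat h (fst (l u)) (snd (l u)) \<noteq> pat h (fst (l (2*h - 1 - u))) (snd (l (2*h - 1 - u)))"
      using pr[OF h2 u] unfolding r by simp
  qed (auto simp: inj_on_def)
next
  case (c j)
  show ?thesis
  proof (rule count_half[where \<sigma>="\<lambda>i. i + h"])
    fix u assume u: "u < h"
    show "pat h (fst (l u)) (snd (l u)) \<noteq> pat h (fst (l (u + h))) (snd (l (u + h)))"
      using pc[OF h2 u] unfolding c by simp
  qed (auto simp: inj_on_def)
next
  case d
  show ?thesis
  proof (cases "even h")
    case True
    show ?thesis
    proof (rule count_half[where \<sigma>="\<lambda>i. i + h"])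
      fix u assume u: "u < h"
      show "pat h (fst (l u)) (snd (l u)) \<noteq> pat h (fst (l (u + h))) (snd (l (u + h)))"
        using pde[OF h2 True u] unfolding d by simp
    qed (auto simp: inj_on_def)
  next
    case False
    show ?thesis
    proof (rule count_half[where \<sigma>="\<lambda>i. if i = 0 then 2*h - 1 else h + i - 1"])
      fix u assume u: "u < h"
      show "pat h (fst (l u)) (snd (l u)) \<noteq> pat h (fst (l (if u = 0 then 2*h - 1 else h + u - 1))) (snd (l (if u = 0 then 2*h - 1 else h + u - 1)))"
        using pdo[OF h2 False u] unfolding d fst_conv snd_conv .
    qed (use h2 in \<open>auto simp: inj_shift\<close>)
  qed
next
  case a
  show ?thesis
  proof (cases "even h")
    case True
    show ?thesis
    proof (rule count_half[where \<sigma>="\<lambda>i. i + h"])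
      fix u assume u: "u < h"
      show "pat h (fst (l u)) (snd (l u)) \<noteq> pat h (fst (l (u + h))) (snd (l (u + h)))"
        using pae[OF h2 True u] unfolding a fst_conv snd_conv .
    qed (auto simp: inj_on_def)
  next
    case False
    show ?thesis
    proof (rule count_half[where \<sigma>="\<lambda>i. if i = 0 then 2*h - 1 else h + i - 1"])
      fix u assume u: "u < h"
      show "pat h (fst (l u)) (snd (l u)) \<noteq> pat h (fst (l (if u = 0 then 2*h - 1 else h + u - 1))) (snd (l (if u = 0 then 2*h - 1 else h + u - 1)))"
        using pao[OF h2 False u] unfolding a fst_conv snd_conv .
    qed (use h2 in \<open>auto simp: inj_shift\<close>)
  qed
qed

lemma lines_range:
  assumes "l \<in> lines n" "v < n"
  shows "fst (l v) < n \<and> snd (l v) < n"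
  using assms(1) by (cases rule: lines_cases) (use assms(2) in auto)

lemma no_ms2: "t \<ge> 1 \<Longrightarrow> \<not> multimagic 2 t a"
proof
  assume t: "t \<ge> 1" and ms: "multimagic 2 t a"
  then have all: "\<forall>e\<in>{1..t}. general_magic 2 (\<lambda>i j. int (a i j) ^ e)" unfolding multimagic_def by blast
  have "(1::nat) \<in> {1..t}" using t by simp
  from bspec[OF all this] have "general_magic 2 (\<lambda>i j. int (a i j) ^ 1)" .
  then obtain s where "\<forall>i<2. (\<Sum>j<2. int (a i j)) = s" "\<forall>j<2. (\<Sum>i<2. int (a i j)) = s"
    unfolding general_magic_def by auto
  then have "(\<Sum>j<2. int (a 0 j)) = (\<Sum>i<2. int (a i 0))" by auto
  then have eq: "a 0 1 = a 1 0" by (simp add: numeral_2_eq_2)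
  have "inj_on (\<lambda>(i, j). a i j) ({..<2} \<times> {..<2})"
    using ms unfolding multimagic_def bij_betw_def by auto
  then have "(0::nat, 1::nat) = (1, 0)"
    by (rule inj_onD) (use eq in auto)
  then show False by simp
qed

lemma prod_bij:
  fixes a b p :: "nat \<Rightarrow> nat \<Rightarrow> _"
  assumes bijA: "bij_betw (\<lambda>(i,j). a i j) ({..<m}\<times>{..<m}) {..<m^2}"
    and bijB: "bij_betw (\<lambda>(i,j). b i j) ({..<n}\<times>{..<n}) {..<n^2}"
    and n0: "n > 0"
  defines "c \<equiv> \<lambda>I J. n^2 * a (I div n) (J div n) +
      (if p (I div n) (J div n) then n^2 - 1 - b (I mod n) (J mod n) else b (I mod n) (J mod n))"
  shows "bij_betw (\<lambda>(I,J). c I J) ({..<m*n}\<times>{..<m*n}) {..<(m*n)^2}"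
proof -
  define N where "N = n^2"
  have bN: "b i j < N" if "i < n" "j < n" for i j
    using bij_betwE[OF bijB] that by (auto simp: N_def)
  have aM: "a i j < m^2" if "i < m" "j < m" for i j
    using bij_betwE[OF bijA] that by auto
  define r where "r I J = (if p (I div n) (J div n) then N - 1 - b (I mod n) (J mod n) else b (I mod n) (J mod n))" for I J
  have rN: "r I J < N" for I J
    using bN[of "I mod n" "J mod n"] n0 by (auto simp: r_def)
  have cr: "c I J = N * a (I div n) (J div n) + r I J" for I J
    by (simp add: c_def r_def N_def)
  have cdiv: "c I J div N = a (I div n) (J div n)" "c I J mod N = r I J" for I J
    using rN[of I J] by (simp_all add: cr)
  have dm: "I div n < m" if "I < m*n" for I
    using that by (simp add: less_mult_imp_div_less)
  have injA: "inj_on (\<lambda>(i,j). a i j) ({..<m}\<times>{..<m})" using bijA by (simp add: bij_betw_def)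
  have injB: "inj_on (\<lambda>(i,j). b i j) ({..<n}\<times>{..<n})" using bijB by (simp add: bij_betw_def)
  have inj: "inj_on (\<lambda>(I,J). c I J) ({..<m*n}\<times>{..<m*n})"
  proof (rule inj_onI, clarify)
    fix I J I' J' assume I: "I < m*n" "J < m*n" "I' < m*n" "J' < m*n" and eq: "c I J = c I' J'"
    have "a (I div n) (J div n) = a (I' div n) (J' div n)" using cdiv(1)[of I J] cdiv(1)[of I' J'] eq by simp
    then have d: "(I div n, J div n) = (I' div n, J' div n)"
      using inj_onD[OF injA, of "(I div n, J div n)" "(I' div n, J' div n)"] dm I by auto
    have "r I J = r I' J'" using cdiv(2)[of I J] cdiv(2)[of I' J'] eq by simp
    then have "b (I mod n) (J mod n) = b (I' mod n) (J' mod n)"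
      using d bN[of "I mod n" "J mod n"] bN[of "I' mod n" "J' mod n"] n0
      by (auto simp: r_def split: if_splits)
    then have "(I mod n, J mod n) = (I' mod n, J' mod n)"
      using inj_onD[OF injB, of "(I mod n, J mod n)" "(I' mod n, J' mod n)"] n0 by auto
    with d show "I = I' \<and> J = J'"
      by (metis div_mult_mod_eq prod.inject)
  qed
  have rng: "(\<lambda>(I,J). c I J) ` ({..<m*n}\<times>{..<m*n}) \<subseteq> {..<(m*n)^2}"
  proof clarify
    fix I J assume I: "I < m*n" "J < m*n"
    have "a (I div n) (J div n) + 1 \<le> m^2" using aM[OF dm[OF I(1)] dm[OF I(2)]] by simp
    then have "N * (a (I div n) (J div n) + 1) \<le> N * m^2" by (rule mult_le_mono2)
    moreover have "c I J < N * (a (I div n) (J div n) + 1)" using rN[of I J] by (simp add: cr)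
    ultimately show "c I J < (m*n)^2" by (simp add: N_def power_mult_distrib mult.commute)
  qed
  have "(\<lambda>(I,J). c I J) ` ({..<m*n}\<times>{..<m*n}) = {..<(m*n)^2}"
  proof (rule card_subset_eq[OF _ rng])
    show "card ((\<lambda>(I,J). c I J) ` ({..<m*n}\<times>{..<m*n})) = card {..<(m*n)^2}"
      using card_image[OF inj] by (simp add: card_cartesian_product power2_eq_square)
  qed simp
  with inj show ?thesis by (simp add: bij_betw_def)
qed

theorem lemma14:
  fixes m n t :: nat
  assumes "even m" and "m > 0" and "odd t" and "t \<ge> 3" and "n \<ge> 1"
    and "\<exists>a. multimagic m t a"
    and "\<exists>b. multimagic n (t - 1) b"
  shows "\<exists>c. multimagic (m * n) t c"
proof -
  obtain a where A: "multimagic m t a" using assms(6) by blast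
  obtain b where B: "multimagic n (t - 1) b" using assms(7) by blast
  have "m \<noteq> 2" using no_ms2[of t a] A assms(4) by auto
  obtain h where mh: "m = 2*h" using assms(1) by (elim evenE)
  have h2: "h \<ge> 2" using mh \<open>m \<noteq> 2\<close> assms(2) by simp
  define N where "N = n^2"
  define p where "p = pat h"
  define c where "c = (\<lambda>I J. n^2 * a (I div n) (J div n) +
      (if p (I div n) (J div n) then n^2 - 1 - b (I mod n) (J mod n) else b (I mod n) (J mod n)))"
  have bijA: "bij_betw (\<lambda>(i,j). a i j) ({..<m}\<times>{..<m}) {..<m^2}" using A by (simp add: multimagic_def)
  have bijB: "bij_betw (\<lambda>(i,j). b i j) ({..<n}\<times>{..<n}) {..<n^2}" using B by (simp add: multimagic_def)
  have bijC: "bij_betw (\<lambda>(I,J). c I J) ({..<m*n}\<times>{..<m*n}) {..<(m*n)^2}"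
    unfolding c_def by (rule prod_bij[OF bijA bijB]) (use assms(5) in simp)
  have "\<forall>e\<in>{1..t}. \<exists>s. \<forall>l\<in>lines m. lsum m (\<lambda>i j. int (a i j) ^ e) l = s"
    using A by (simp add: multimagic_def gm_iff)
  then obtain sA where sA: "\<And>e l. e \<in> {1..t} \<Longrightarrow> l \<in> lines m \<Longrightarrow> lsum m (\<lambda>i j. int (a i j) ^ e) l = sA e"
    by metis
  have "\<forall>e\<in>{1..t-1}. \<exists>s. \<forall>l\<in>lines n. lsum n (\<lambda>i j. int (b i j) ^ e) l = s"
    using B by (simp add: multimagic_def gm_iff)
  then obtain sB where sB0: "\<And>e l. e \<in> {1..t-1} \<Longrightarrow> l \<in> lines n \<Longrightarrow> lsum n (\<lambda>i j. int (b i j) ^ e) l = sB e"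
    by metis
  have sB: "(\<Sum>v<n. bv b l v ^ k) = sB k" if "1 \<le> k" "k < t" "l \<in> lines n" for k l
    using sB0[of k l] that by (simp add: lsum_def bv_def)
  obtain T where T: "\<And>l. l \<in> lines n \<Longrightarrow> (\<Sum>v<n. bv b l v ^ t + (int (n^2) - 1 - bv b l v)^t) = T"
    using T_exists[OF bijB sB assms(5) assms(3)] by blast
  have magic: "general_magic (m*n) (\<lambda>I J. int (c I J) ^ e)" if e: "1 \<le> e" "e \<le> t" for e
    unfolding gm_iff
  proof (intro exI ballI)
    fix l assume l: "l \<in> lines (m*n)"
    obtain l1 l2 where l1: "l1 \<in> lines m" and l2: "l2 \<in> lines n"
      and lsp: "\<And>u v. u < m \<Longrightarrow> v < n \<Longrightarrow>
         l (u*n+v) = (fst (l1 u)*n + fst (l2 v), snd (l1 u)*n + snd (l2 v))"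
      using line_split[OF l] assms(5) by auto
    define \<alpha> where "\<alpha> u = int (a (fst (l1 u)) (snd (l1 u)))" for u
    define \<pi> where "\<pi> u = p (fst (l1 u)) (snd (l1 u))" for u
    define \<beta> where "\<beta> v = bv b l2 v" for v
    have cval: "int (c (fst (l (u*n+v))) (snd (l (u*n+v)))) =
        int N * \<alpha> u + (if \<pi> u then int N - 1 - \<beta> v else \<beta> v)" if uv: "u < m" "v < n" for u v
    proof -
      have r1: "fst (l1 u) < m" "snd (l1 u) < m" using lines_range[OF l1 uv(1)] by auto
      have r2: "fst (l2 v) < n" "snd (l2 v) < n" using lines_range[OF l2 uv(2)] by auto
      have bl: "b (fst (l2 v)) (snd (l2 v)) < N" using bij_betwE[OF bijB] r2 by (auto simp: N_def)
      have "c (fst (l (u*n+v))) (snd (l (u*n+v))) = N * a (fst (l1 u)) (snd (l1 u)) +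
          (if \<pi> u then N - 1 - b (fst (l2 v)) (snd (l2 v)) else b (fst (l2 v)) (snd (l2 v)))"
        using r2 by (simp add: lsp[OF uv] c_def N_def \<pi>_def)
      then show ?thesis using bl by (simp add: \<alpha>_def \<beta>_def bv_def of_nat_diff)
    qed
    have "lsum (m*n) (\<lambda>I J. int (c I J) ^ e) l = (\<Sum>J<m*n. int (c (fst (l J)) (snd (l J))) ^ e)"
      by (simp add: lsum_def)
    also have "\<dots> = (\<Sum>u<m. \<Sum>v<n. int (c (fst (l (u*n+v))) (snd (l (u*n+v)))) ^ e)"
      by (rule sum_split)
    also have "\<dots> = (\<Sum>u<m. \<Sum>v<n. (int N * \<alpha> u + (if \<pi> u then (int N - 1) - \<beta> v else \<beta> v)) ^ e)"
      by (intro sum.cong refl) (simp add: cval)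
    also have "\<dots> = (\<Sum>k\<le>e. of_nat (e choose k) * int N^k * (if k = 0 then (if e < t then of_nat m * sB e else of_nat h * T)
        else sA k * (if k = e then of_nat n else sB (e-k))))"
    proof (rule core[OF _ _ _ _ _ mh e])
      show "(\<Sum>u<m. \<alpha> u ^ k) = sA k" if "1 \<le> k" "k \<le> t" for k
        using sA[of k l1] that l1 by (simp add: lsum_def \<alpha>_def)
      show "(\<Sum>v<n. \<beta> v ^ k) = sB k" if "1 \<le> k" "k < t" for k
        using sB[OF that l2] by (simp add: \<beta>_def)
      show "(\<Sum>v<n. (int N - 1 - \<beta> v) ^ k) = sB k" if "1 \<le> k" "k < t" for k
        using compl_sum[OF bijB sB assms(5) l2 that] by (simp add: \<beta>_def N_def)
      show "(\<Sum>v<n. \<beta> v ^ t + (int N - 1 - \<beta> v) ^ t) = T"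
        using T[OF l2] by (simp add: \<beta>_def N_def)
      show "card {u \<in> {..<m}. \<pi> u} = h"
        using pat_lines[OF h2, of l1] l1 by (simp add: mh \<pi>_def p_def)
    qed
    finally show "lsum (m*n) (\<lambda>I J. int (c I J) ^ e) l = (\<Sum>k\<le>e. of_nat (e choose k) * int N^k * (if k = 0 then (if e < t then of_nat m * sB e else of_nat h * T)
        else sA k * (if k = e then of_nat n else sB (e-k))))" .
  qed
  have "multimagic (m*n) t c"
    unfolding multimagic_def using bijC magic by auto
  then show ?thesis by blast
qed

end
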